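(* Let $m\ge2$. For $j\ge0$ write $J_0=[j]_{t^m}$, $J_1=[j+1]_{t^m}$, $J_2=[j+2]_{t^m}$, and write $\beta=\beta(m;t,q)$. Define, for all $j\ge0$ (with the special values at index $0$ taking precedence over the general formulas): $A_0=-q^{m-2}$; $A_{2j}=(-t)^mq^{m-2}J_0/J_1$ ($j\ge1$); $A_{2j+1}=\frac{(-1)^mJ_2}{J_1}\beta+\left(\frac{1-2J_2}{J_1}-\frac{t^{m(j+1)}J_2}{J_1^2}\right)q^m$; $B_{2j}=\beta+2\left(\frac1{J_1}-1\right)(-q)^m$; $B_{2j+1}=\beta-2\left(\frac{t^{m(j+1)}}{J_1}+1\right)(-q)^m$; $C_0=-t^mq^{m+2}$; $C_{2j}=-\beta q^2-\left(\frac1{J_1}-\frac{t^{mj}}{J_0}-2\right)(-q)^{m+2}$ ($j\ge1$); $C_{2j+1}=-q^m$; $k_{2j}=m-2$, $k_{2j+1}=0$; $a_0=-1$, $a_{2j}=(-t)^mJ_0/J_1$ ($j\ge1$), $a_{2j+1}=(-1)^mJ_2/J_1$; $D_{2j}=\beta-(-q)^m(1+t^m)$, $D_{2j+1}=1$. Then for every $n\ge0$, $\mathtt{NextABC}(A_n,B_n,C_n)=(A_{n+1},B_{n+1},C_{n+1};k_n,a_n,D_n)$.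
   Context: For $0\le d\le m-1$ let $\rho(m;t,d)=\frac{m}{m-d}\sum_{i=0}^{d}\binom{m-1-d+i}{i}\binom{m-1-i}{d-i}t^i$ and $\rho(m;t,m)=1+t^m$; set $\beta(m;t,q)=\sum_{d=0}^{m}\rho(m;t,d)(-q)^d$. $[n]_x=1+x+\cdots+x^{n-1}$. All objects are polynomials in $q$ with coefficients in $\mathbb{Q}(t)$. The map $\mathtt{NextABC}$ takes polynomials $A,B,C$ in $q$ with $A\ne0$, $C\ne0$, $B(0)=1$, $C(0)=0$ and returns $(A^*,B^*,C^*;k,a,D)$ defined as follows: $k\ge0$ and $a\ne0$ are such that $A=aq^k+O(q^{k+1})$; $D$ is the unique polynomial in $q$ of degree at most $k+1$ with $\frac{aq^kB}{A}-\frac{aq^kC}{B}=D+O(q^{k+2})$ (as power series in $q$); and $A^*=\bigl(-D^2A/a+BDq^k-Caq^{2k}\bigr)/q^{2k+2}$, $B^*=2AD/(aq^k)-B$, $C^*=-Aq^2/a$. *)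

theory Defs
  imports "HOL-Computational_Algebra.Computational_Algebra"
begin

text \<open>Coefficient field Q(t): the fraction field of Q[t]; t is the indeterminate.
  Objects of the paper are polynomials in q over this field, i.e. elements of type "K poly".\<close>

type_synonym K = "rat poly fract"

definition tt :: K where "tt = Fract [:0, 1:] 1"

definition qq :: "K poly" where "qq = [:0, 1:]"

definition qint :: "nat \<Rightarrow> K \<Rightarrow> K" where
  "qint n x = (\<Sum>i<n. x ^ i)"

definition rho :: "nat \<Rightarrow> nat \<Rightarrow> K" where
  "rho m d = (if d = m then 1 + tt ^ m
     else of_nat m / of_nat (m - d) *
          (\<Sum>i=0..d. of_nat ((m - 1 - d + i) choose i) * of_nat ((m - 1 - i) choose (d - i)) * tt ^ i))"

definition beta :: "nat \<Rightarrow> K poly" where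
  "beta m = (\<Sum>d=0..m. smult (rho m d) ((- qq) ^ d))"

text \<open>The map NextABC, as a relation: NextABC A B C A' B' C' k a D means that (A,B,C) lies
  in the domain of NextABC and NextABC(A,B,C) = (A',B',C';k,a,D).
  The divisions by q^(2k+2) and by a q^k in the definition of A*, B* are expressed
  multiplicatively (the polynomial ring is a domain, so this determines A*, B*, and
  asserts that the divisions are exact).\<close>
definition NextABC :: "K poly \<Rightarrow> K poly \<Rightarrow> K poly \<Rightarrow> K poly \<Rightarrow> K poly \<Rightarrow> K poly
    \<Rightarrow> nat \<Rightarrow> K \<Rightarrow> K poly \<Rightarrow> bool" where
  "NextABC A B C A' B' C' k a D \<longleftrightarrow>
     A \<noteq> 0 \<and> C \<noteq> 0 \<and> poly B 0 = 1 \<and> poly C 0 = 0 \<and>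
     a \<noteq> 0 \<and> (\<forall>i<k. coeff A i = 0) \<and> coeff A k = a \<and>
     degree D \<le> k + 1 \<and>
     (\<forall>i\<le>k + 1. fps_nth (fps_of_poly (smult a (qq ^ k) * B) / fps_of_poly A
                        - fps_of_poly (smult a (qq ^ k) * C) / fps_of_poly B) i = coeff D i) \<and>
     A' * qq ^ (2 * k + 2) = - smult (inverse a) (D ^ 2 * A) + B * D * qq ^ k - smult a (C * qq ^ (2 * k)) \<and>
     B' * smult a (qq ^ k) = smult 2 (A * D) - B * smult a (qq ^ k) \<and>
     C' = - smult (inverse a) (A * qq ^ 2)"

definition J :: "nat \<Rightarrow> nat \<Rightarrow> K" where "J m j = qint j (tt ^ m)"

definition Aseq :: "nat \<Rightarrow> nat \<Rightarrow> K poly" where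
  "Aseq m n = (let j = n div 2; J0 = J m j; J1 = J m (j + 1); J2 = J m (j + 2) in
     if even n then
       (if j = 0 then - (qq ^ (m - 2)) else smult ((- tt) ^ m * J0 / J1) (qq ^ (m - 2)))
     else smult ((- 1) ^ m * J2 / J1) (beta m)
          + smult ((1 - 2 * J2) / J1 - tt ^ (m * (j + 1)) * J2 / J1 ^ 2) (qq ^ m))"

definition Bseq7 :: "nat \<Rightarrow> nat \<Rightarrow> K poly" where
  "Bseq7 m n = (let j = n div 2; J1 = J m (j + 1) in
     if even n then beta m + smult (2 * (1 / J1 - 1)) ((- qq) ^ m)
     else beta m - smult (2 * (tt ^ (m * (j + 1)) / J1 + 1)) ((- qq) ^ m))"

definition Cseq :: "nat \<Rightarrow> nat \<Rightarrow> K poly" where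
  "Cseq m n = (let j = n div 2; J0 = J m j; J1 = J m (j + 1) in
     if even n then
       (if j = 0 then - (smult (tt ^ m) (qq ^ (m + 2)))
        else - beta m * qq ^ 2 - smult (1 / J1 - tt ^ (m * j) / J0 - 2) ((- qq) ^ (m + 2)))
     else - (qq ^ m))"

definition kseq :: "nat \<Rightarrow> nat \<Rightarrow> nat" where
  "kseq m n = (if even n then m - 2 else 0)"

definition aseq :: "nat \<Rightarrow> nat \<Rightarrow> K" where
  "aseq m n = (let j = n div 2; J0 = J m j; J1 = J m (j + 1); J2 = J m (j + 2) in
     if even n then (if j = 0 then - 1 else (- tt) ^ m * J0 / J1)
     else (- 1) ^ m * J2 / J1)"

definition Dseq :: "nat \<Rightarrow> nat \<Rightarrow> K poly" where
  "Dseq m n = (if even n then beta m - smult (1 + tt ^ m) ((- qq) ^ m) else 1)"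

end

theory Submission
  imports Defs
begin

definition emb :: "rat poly \<Rightarrow> K" where "emb p = Fract p 1"

lemma emb_add: "emb (p + q) = emb p + emb q" by (simp add: emb_def)
lemma emb_mult: "emb (p * q) = emb p * emb q" by (simp add: emb_def)
lemma emb_1: "emb 1 = 1" by (simp add: emb_def One_fract_def)
lemma emb_0_iff: "emb p = 0 \<longleftrightarrow> p = 0" by (simp add: emb_def Zero_fract_def eq_fract)
lemma emb_pow: "emb (p ^ n) = emb p ^ n"
  by (induction n) (simp_all add: emb_1 emb_mult)
lemma emb_0: "emb 0 = 0" by (simp add: emb_def Zero_fract_def[symmetric])
lemma emb_sum: "emb (\<Sum>i<(n::nat). f i) = (\<Sum>i<n. emb (f i))"
  by (induction n) (simp_all add: emb_add emb_0)

lemma tt_emb: "tt = emb [:0,1:]" by (simp add: tt_def emb_def)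

lemma J_emb: "J m n = emb (\<Sum>i<n. [:0,1:] ^ (m*i))"
  by (simp add: J_def qint_def emb_sum emb_pow tt_emb power_mult)

lemma J_nz: assumes "m \<ge> 1" "n \<ge> 1" shows "J m n \<noteq> 0"
proof -
  have "poly (\<Sum>i<n. [:0,1::rat:] ^ (m*i)) 0 = (\<Sum>i<n. (0::rat) ^ (m*i))"
    by (simp add: poly_sum)
  also have "\<dots> = (\<Sum>i\<in>{0}. (0::rat) ^ (m*i))"
    using assms by (intro sum.mono_neutral_right) auto
  finally have "(\<Sum>i<n. [:0,1::rat:] ^ (m*i)) \<noteq> 0" by auto
  then show ?thesis by (simp add: J_emb emb_0_iff)
qed

lemma tt_nz: "tt \<noteq> 0" by (simp add: tt_emb emb_0_iff)

lemma J_0: "J m 0 = 0" by (simp add: J_def qint_def)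
lemma J_Suc: "J m (Suc j) = 1 + tt^m * J m j"
  unfolding J_def qint_def sum.lessThan_Suc_shift by (simp add: sum_distrib_left)
lemma J_diff: "J m (Suc j) = J m j + tt^(m*j)"
  by (simp add: J_def qint_def power_mult)

lemma fps_qq: "fps_of_poly qq = fps_X"
  by (rule fps_ext) (simp add: qq_def coeff_pCons split: nat.split)

lemma fps_quot:
  fixes X Y Z W :: "K poly"
  assumes "coeff Y 0 \<noteq> 0" "X = Z*Y + qq^N*W" "i < N"
  shows "(fps_of_poly X / fps_of_poly Y) $ i = coeff Z i"
proof -
  have y0: "fps_of_poly Y $ 0 \<noteq> 0" using assms(1) by simp
  have "fps_of_poly X / fps_of_poly Y = (fps_of_poly Z * fps_of_poly Y + fps_X^N * fps_of_poly W) * inverse (fps_of_poly Y)"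
    using assms(2) y0 by (simp add: fps_divide_unit fps_of_poly_add fps_of_poly_mult fps_of_poly_power fps_qq)
  also have "\<dots> = fps_of_poly Z * (fps_of_poly Y * inverse (fps_of_poly Y)) + fps_X^N * (fps_of_poly W * inverse (fps_of_poly Y))"
    by (simp add: algebra_simps)
  also have "\<dots> = fps_of_poly Z + fps_X^N * (fps_of_poly W * inverse (fps_of_poly Y))"
    using inverse_mult_eq_1'[OF y0] by simp
  finally show ?thesis using assms(3) by (simp add: fps_X_power_mult_nth)
qed

lemma fps_cancel:
  fixes A B :: "K poly"
  assumes "A \<noteq> 0"
  shows "fps_of_poly (A * B) / fps_of_poly A = fps_of_poly B"
  using assms by (simp add: fps_of_poly_mult)

lemma sm: "smult c p = [:c:] * p" by simp
lemma c_add: "[:x + y:] = [:x:] + [:y:]" by simp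
lemma c_mult: "[:x * y:] = [:x:] * [:y:]" by (metis mult_to_poly)
lemma c_minus: "[:- x:] = - [:x:]" by simp
lemma c_diff: "[:x - y:] = [:x:] - [:y:]" by simp

lemma even_poly:
  fixes b P Q :: "K poly" and a \<delta> \<gamma> \<kappa> \<epsilon> x1 x2 :: K
  assumes "a \<noteq> 0" "Q = P*qq^2" "x1 = \<delta>+\<gamma>+a*\<kappa>" "x2 = -\<gamma>*(\<delta>+\<gamma>)+a*\<epsilon>"
  shows "(smult x1 b + smult x2 Q) * (P*Q) = - smult (inverse a) ((b - smult \<gamma> Q)^2 * smult a P)
     + (b + smult \<delta> Q) * (b - smult \<gamma> Q) * P - smult a ((- smult \<kappa> (b*qq^2) - smult \<epsilon> (Q*qq^2)) * (P*P))"
proof -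
  have ia: "[:inverse a:] * [:a:] = 1" using assms(1) by (simp add: mult_to_poly)
  show ?thesis unfolding assms(3,4) sm c_add c_mult c_minus c_diff assms(2)
    using ia by algebra
qed

lemma negqq: "(-qq)^n = smult ((-1)^n) (qq^n)"
  by (induction n) simp_all

lemma J_Suc_diff: "tt^(m*j) = J m (Suc j) - J m j" by (simp add: J_diff)

lemma A_even: "Aseq m (2*j) = smult (aseq m (2*j)) (qq^(m-2))"
  by (simp add: Aseq_def aseq_def Let_def)
lemma a_even: "aseq m (2*j) = (if j=0 then -1 else (-1)^m*tt^m*J m j/J m (j+1))"
proof -
  have e: "(-tt)^m = (-1)^m*tt^m" by (rule power_minus)
  show ?thesis by (simp add: aseq_def Let_def e)
qed
lemma B_even: "Bseq7 m (2*j) = beta m + smult (2*(1/J m (j+1) - 1)*(-1)^m) (qq^m)"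
  by (simp add: Bseq7_def Let_def negqq)
lemma C_even: "j \<ge> 1 \<Longrightarrow> Cseq m (2*j) = - smult 1 (beta m * qq^2)
   - smult ((1/J m (j+1) - (J m (j+1) - J m j)/J m j - 2)*(-1)^m) (qq^m*qq^2)"
proof -
  assume j: "j \<ge> 1"
  have e1: "tt^(m*j) = J m (j+1) - J m j" using J_diff[of m j] by simp
  have e2: "(-qq)^(m+2) = smult ((-1)^m) (qq^m*qq^2)" by (simp only: negqq power_add) simp
  have "Cseq m (2*j) = - beta m * qq ^ 2 - smult (1 / J m (j+1) - tt ^ (m * j) / J m j - 2) ((- qq) ^ (m + 2))"
    using j by (simp add: Cseq_def Let_def)
  also have "\<dots> = - smult 1 (beta m * qq^2)
   - smult ((1/J m (j+1) - (J m (j+1) - J m j)/J m j - 2)*(-1)^m) (qq^m*qq^2)"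
    unfolding e1 e2 by simp
  finally show ?thesis .
qed
lemma C_0: "Cseq m 0 = - smult 0 (beta m*qq^2) - smult (tt^m) (qq^m*qq^2)"
proof -
  have e: "qq^(m+2) = qq^m*qq^2" by (simp only: power_add)
  show ?thesis unfolding Cseq_def Let_def e by simp
qed
lemma D_even: "Dseq m (2*j) = beta m - smult ((1+tt^m)*(-1)^m) (qq^m)"
  by (simp add: Dseq_def negqq)
lemma A_odd: "Aseq m (2*j+1) = smult ((-1)^m*J m (j+2)/J m (j+1)) (beta m)
   + smult ((1 - 2*J m (j+2))/J m (j+1) - (J m (j+2) - J m (j+1))*J m (j+2)/J m (j+1)^2) (qq^m)"
proof -
  have "tt^(m*(j+1)) = J m (j+2) - J m (j+1)" using J_Suc_diff[of m "j+1"] by simp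
  then show ?thesis by (simp add: Aseq_def Let_def)
qed
lemma a_odd: "aseq m (2*j+1) = (-1)^m*J m (j+2)/J m (j+1)"
  by (simp add: aseq_def Let_def)
lemma B_odd: "Bseq7 m (2*j+1) = beta m + smult (-(2*((J m (j+2) - J m (j+1))/J m (j+1) + 1)*(-1)^m)) (qq^m)"
proof -
  have "tt^(m*(j+1)) = J m (j+2) - J m (j+1)" using J_Suc_diff[of m "j+1"] by simp
  then show ?thesis by (simp add: Bseq7_def Let_def negqq)
qed
lemma C_odd: "Cseq m (2*j+1) = - (qq^m)"
  by (simp add: Cseq_def Let_def)
lemma D_odd: "Dseq m (2*j+1) = 1" by (simp add: Dseq_def)
lemma k_even: "kseq m (2*j) = m - 2" by (simp add: kseq_def)
lemma k_odd: "kseq m (2*j+1) = 0" by (simp add: kseq_def)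

lemma sc_E1a: fixes u J0 J1 J2 s :: K
  assumes "J1 = 1+u*J0" "J2 = 1+u*J1" "J1 \<noteq> 0"
  shows "s*J2/J1 = 2*(1/J1-1)*s + (1+u)*s + (s*u*J0/J1)*1"
  using assms(3) apply (simp add: field_simps)
  using assms(1,2) by algebra

lemma sc_E1b: fixes u J0 J1 J2 s :: K
  assumes "J1 = 1+u*J0" "J2 = 1+u*J1" "s*s = 1" "J1 \<noteq> 0" "J0 \<noteq> 0"
  shows "(1-2*J2)/J1 - (J2-J1)*J2/J1^2 = -((1+u)*s)*(2*(1/J1-1)*s + (1+u)*s) + (s*u*J0/J1)*((1/J1 - (J1-J0)/J0 - 2)*s)"
  using assms(4,5) apply (simp add: field_simps)
  using assms(1,2,3) by algebra

lemma sc_E2: fixes u J0 J1 J2 s :: K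
  assumes "J1 = 1+u*J0" "J2 = 1+u*J1" "J1 \<noteq> 0"
  shows "-(2*((J2-J1)/J1+1)*s) = -(2*((1+u)*s) + 2*(1/J1-1)*s)"
  using assms(3) apply (simp add: field_simps)
  using assms(1,2) by algebra

lemma sc_O1: fixes u J1 J2 s :: K
  assumes "J2 = 1+u*J1" "s*s = 1" "J1 \<noteq> 0" "J2 \<noteq> 0"
  shows "s*u*J1/J2 = -(2*((J2-J1)/J1+1)*s) + s*J2/J1 - ((1-2*J2)/J1 - (J2-J1)*J2/J1^2) * inverse (s*J2/J1)"
proof -
  have s0: "s \<noteq> 0" using assms(2) by auto
  have "inverse s = s" using assms(2) by (metis inverse_unique)
  then show ?thesis
  using assms(3,4) s0 apply (simp add: field_simps)
  using assms(1,2) by algebra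
qed

lemma sc_O2: fixes u J1 J2 s :: K
  assumes "J2 = 1+u*J1" "s*s = 1" "J1 \<noteq> 0" "J2 \<noteq> 0"
  shows "2*(1/J2-1)*s = 2*(((1-2*J2)/J1 - (J2-J1)*J2/J1^2) * inverse (s*J2/J1)) - (-(2*((J2-J1)/J1+1)*s))"
proof -
  have s0: "s \<noteq> 0" using assms(2) by auto
  have "inverse s = s" using assms(2) by (metis inverse_unique)
  then show ?thesis
  using assms(3,4) s0 apply (simp add: field_simps)
  using assms(1,2) by algebra
qed

lemma sc_O3: fixes u J1 J2 s :: K
  assumes "J2 = 1+u*J1" "s*s = 1" "J1 \<noteq> 0" "J2 \<noteq> 0"
  shows "(1/J2 - (J2-J1)/J1 - 2)*s = ((1-2*J2)/J1 - (J2-J1)*J2/J1^2) * inverse (s*J2/J1)"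
proof -
  have s0: "s \<noteq> 0" using assms(2) by auto
  have "inverse s = s" using assms(2) by (metis inverse_unique)
  then show ?thesis
  using assms(3,4) s0 apply (simp add: field_simps)
  using assms(1,2) by algebra
qed



lemma qq_pow: "qq^k = monom 1 k" by (simp add: qq_def monom_altdef)
lemma coeff_qq_pow: "coeff (qq^k) i = (if i = k then 1 else 0)" by (simp add: qq_pow)

lemma beta_split:
  assumes "m \<ge> 1"
  shows "beta m = (\<Sum>d=0..m-1. smult (rho m d) ((-qq)^d)) + smult ((1+tt^m)*(-1)^m) (qq^m)"
proof -
  obtain m' where m: "m = Suc m'" using assms by (cases m) auto
  have "beta m = (\<Sum>d=0..m'. smult (rho m d) ((-qq)^d)) + smult (rho m m) ((-qq)^m)"
    unfolding beta_def m by (simp add: sum.atLeast0_atMost_Suc)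
  also have "smult (rho m m) ((-qq)^m) = smult ((1+tt^m)*(-1)^m) (qq^m)"
    by (simp add: rho_def negqq)
  finally show ?thesis using m by simp
qed

lemma D_deg:
  assumes "m \<ge> 1"
  shows "degree (beta m - smult ((1+tt^m)*(-1)^m) (qq^m)) \<le> m-1"
proof -
  have "beta m - smult ((1+tt^m)*(-1)^m) (qq^m) = (\<Sum>d=0..m-1. smult (rho m d) ((-qq)^d))"
    using beta_split[OF assms] by simp
  also have "degree \<dots> \<le> m - 1"
  proof (rule degree_sum_le)
    fix d assume d: "d \<in> {0..m-1}"
    have "degree (smult (rho m d) ((-qq)^d)) \<le> degree ((-qq)^d)" by (rule degree_smult_le)
    also have "\<dots> \<le> degree (-qq) * d" by (rule degree_power_le)
    also have "\<dots> = d" by (simp add: qq_def)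
    finally show "degree (smult (rho m d) ((-qq)^d)) \<le> m - 1" using d by simp
  qed simp
  finally show ?thesis .
qed

lemma beta0:
  assumes "m \<ge> 1"
  shows "coeff (beta m) 0 = 1"
proof -
  have "coeff (beta m) 0 = (\<Sum>d=0..m. rho m d * ((-1)^d * (if 0 = d then 1 else 0)))"
    by (simp add: beta_def coeff_sum negqq coeff_qq_pow mult.assoc)
  also have "\<dots> = (\<Sum>d=0..m. (if d = 0 then rho m 0 else 0))"
    by (rule sum.cong) auto
  also have "\<dots> = rho m 0" by simp
  also have "\<dots> = 1" using assms by (simp add: rho_def)
  finally show ?thesis .
qed

lemma even_case:
  assumes m2: "m \<ge> 2"
  shows "NextABC (Aseq m (2*j)) (Bseq7 m (2*j)) (Cseq m (2*j)) (Aseq m (2*j+1)) (Bseq7 m (2*j+1))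
           (Cseq m (2*j+1)) (kseq m (2*j)) (aseq m (2*j)) (Dseq m (2*j))"
proof -
  define b where "b = beta m"
  define P where "P = qq^(m-2)"
  define Q where "Q = qq^m"
  define s where "s = (-1::K)^m"
  define u where "u = tt^m"
  define J0 where "J0 = J m j"
  define J1 where "J1 = J m (j+1)"
  define J2 where "J2 = J m (j+2)"
  define a where "a = aseq m (2*j)"
  define \<delta> where "\<delta> = 2*(1/J1-1)*s"
  define \<gamma> where "\<gamma> = (1+u)*s"
  define \<kappa> where "\<kappa> = (if j = 0 then 0 else (1::K))"
  define \<epsilon> where "\<epsilon> = (if j = 0 then u else (1/J1 - (J1-J0)/J0 - 2)*s)"
  define r where "r = (1-2*J2)/J1 - (J2-J1)*J2/J1^2"
  have m1: "m \<ge> 1" using m2 by simp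
  have QP: "Q = P*qq^2"
  proof -
    have "m = (m-2)+2" using m2 by simp
    then show ?thesis unfolding Q_def P_def by (metis power_add)
  qed
  have hJ1: "J1 = 1+u*J0" unfolding J1_def J0_def u_def using J_Suc[of m j] by simp
  have hJ2: "J2 = 1+u*J1" unfolding J2_def J1_def u_def using J_Suc[of m "j+1"] by simp
  have ss: "s*s = 1" unfolding s_def by (simp flip: power_mult_distrib)
  have J1nz: "J1 \<noteq> 0" unfolding J1_def using J_nz m1 by simp
  have J2nz: "J2 \<noteq> 0" unfolding J2_def using J_nz m1 by simp
  have unz: "u \<noteq> 0" unfolding u_def using tt_nz by simp
  have s0: "s \<noteq> 0" using ss by auto
  have a_eq: "a = (if j=0 then -1 else s*u*J0/J1)"
    unfolding a_def s_def u_def J0_def J1_def by (simp add: a_even)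
  have J0nz: "j \<ge> 1 \<Longrightarrow> J0 \<noteq> 0" unfolding J0_def using J_nz m1 by simp
  have anz: "a \<noteq> 0" using a_eq J0nz J1nz unz s0 by auto
  have hA: "Aseq m (2*j) = smult a P" unfolding a_def P_def by (rule A_even)
  have hB: "Bseq7 m (2*j) = b + smult \<delta> Q" unfolding b_def \<delta>_def Q_def J1_def s_def by (rule B_even)
  have hD: "Dseq m (2*j) = b - smult \<gamma> Q" unfolding b_def \<gamma>_def Q_def u_def s_def by (rule D_even)
  have hC: "Cseq m (2*j) = - smult \<kappa> (b*qq^2) - smult \<epsilon> (Q*qq^2)"
  proof (cases "j = 0")
    case True then show ?thesis using C_0[of m] unfolding \<kappa>_def \<epsilon>_def b_def Q_def u_def by simp
  next
    case False then show ?thesis using C_even[of j m]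
      unfolding \<kappa>_def \<epsilon>_def b_def Q_def J0_def J1_def s_def by simp
  qed
  have hA': "Aseq m (2*j+1) = smult (s*J2/J1) b + smult r Q"
    unfolding r_def s_def J2_def J1_def b_def Q_def by (rule A_odd)
  have hB': "Bseq7 m (2*j+1) = b + smult (-(2*((J2-J1)/J1+1)*s)) Q"
    unfolding s_def J2_def J1_def b_def Q_def by (rule B_odd)
  have hC': "Cseq m (2*j+1) = -Q" unfolding Q_def by (rule C_odd)
  have hk: "kseq m (2*j) = m-2" by (rule k_even)
  have x1: "s*J2/J1 = \<delta>+\<gamma>+a*\<kappa>"
  proof (cases "j=0")
    case True then have "J0 = 0" unfolding J0_def by (simp add: J_0)
    then show ?thesis using True hJ1 hJ2 unfolding \<delta>_def \<gamma>_def \<kappa>_def by simp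
  next
    case False then show ?thesis using sc_E1a[OF hJ1 hJ2 J1nz, of s] a_eq unfolding \<delta>_def \<gamma>_def \<kappa>_def by simp
  qed
  have x2: "r = -\<gamma>*(\<delta>+\<gamma>)+a*\<epsilon>"
  proof (cases "j=0")
    case True then have "J0 = 0" unfolding J0_def by (simp add: J_0)
    then have e: "J1 = 1" "J2 = 1+u" using hJ1 hJ2 by auto
    have r1: "r = -1 - 3*u - u^2" unfolding r_def e by (simp add: algebra_simps power2_eq_square)
    have eps: "\<epsilon> = u" "a = -1" "\<delta> = 0" using True by (simp_all add: \<epsilon>_def a_eq \<delta>_def e)
    have r2: "-1 - 3*u - u^2 = -\<gamma>*(\<delta>+\<gamma>)+a*\<epsilon>" unfolding eps \<gamma>_def using ss by algebra
    show ?thesis using r1 r2 by simp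
  next
    case False then show ?thesis using sc_E1b[OF hJ1 hJ2 ss J1nz J0nz] a_eq
      unfolding r_def \<delta>_def \<gamma>_def \<epsilon>_def by simp
  qed
  have x3: "-(2*((J2-J1)/J1+1)*s) = -(2*\<gamma>+\<delta>)"
    using sc_E2[OF hJ1 hJ2 J1nz, of s] unfolding \<gamma>_def \<delta>_def by simp
  have p1: "qq^(2*(m-2)+2) = P*Q" unfolding QP P_def by (simp only: mult_2 power_add mult.assoc)
  have p2: "qq^(2*(m-2)) = P*P" unfolding P_def by (simp only: mult_2 power_add)
  have Qnz: "Q \<noteq> 0" unfolding Q_def qq_def by simp
  have cQ: "\<And>i. i < m \<Longrightarrow> coeff Q i = 0" unfolding Q_def by (simp add: coeff_qq_pow)
  have b0: "coeff b 0 = 1" unfolding b_def using beta0 m1 .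
  have f1: "smult a P \<noteq> 0" using anz by (simp add: P_def qq_def)
  have f2: "- smult \<kappa> (b*qq^2) - smult \<epsilon> (Q*qq^2) \<noteq> 0"
  proof
    assume h: "- smult \<kappa> (b*qq^2) - smult \<epsilon> (Q*qq^2) = 0"
    have "- smult \<kappa> (b*qq^2) - smult \<epsilon> (Q*qq^2) = - ((smult \<kappa> b + smult \<epsilon> Q) * qq^2)"
      by (simp add: algebra_simps)
    with h have h2: "smult \<kappa> b + smult \<epsilon> Q = 0" by (simp add: qq_def)
    then have "coeff (smult \<kappa> b + smult \<epsilon> Q) 0 = 0" by simp
    then have "\<kappa> = 0" using b0 cQ[of 0] m1 by simp
    then have "j = 0" unfolding \<kappa>_def by (simp split: if_splits)
    then have "smult u Q = 0" using h2 unfolding \<kappa>_def \<epsilon>_def by simp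
    then show False using unz Qnz by simp
  qed
  have f3: "poly (b + smult \<delta> Q) 0 = 1" using b0 cQ[of 0] m1 by (simp add: poly_0_coeff_0)
  have f4: "poly (- smult \<kappa> (b*qq^2) - smult \<epsilon> (Q*qq^2)) 0 = 0" by (simp add: qq_def)
  have f6: "\<forall>i<m-2. coeff (smult a P) i = 0" by (simp add: P_def coeff_qq_pow)
  have f7: "coeff (smult a P) (m-2) = a" by (simp add: P_def coeff_qq_pow)
  have f8: "degree (b - smult \<gamma> Q) \<le> m-2+1"
    using D_deg[OF m1] m2 unfolding b_def \<gamma>_def Q_def u_def s_def by simp
  have f9: "\<forall>i\<le>m-2+1. fps_nth (fps_of_poly (smult a P * (b + smult \<delta> Q)) / fps_of_poly (smult a P)
     - fps_of_poly (smult a P * (- smult \<kappa> (b*qq^2) - smult \<epsilon> (Q*qq^2))) / fps_of_poly (b + smult \<delta> Q)) i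
     = coeff (b - smult \<gamma> Q) i"
  proof (intro allI impI)
    fix i assume i: "i \<le> m-2+1"
    then have im: "i < m" using m2 by simp
    have q1: "fps_of_poly (smult a P * (b + smult \<delta> Q)) / fps_of_poly (smult a P) = fps_of_poly (b + smult \<delta> Q)"
      by (rule fps_cancel[OF f1])
    have X: "smult a P * (- smult \<kappa> (b*qq^2) - smult \<epsilon> (Q*qq^2)) = 0 * (b + smult \<delta> Q) + qq^m * (- smult a (smult \<kappa> b + smult \<epsilon> Q))"
    proof -
      have "smult a P * (- smult \<kappa> (b*qq^2) - smult \<epsilon> (Q*qq^2)) = 0 * (b + smult \<delta> Q) + Q * (- smult a (smult \<kappa> b + smult \<epsilon> Q))"
        unfolding sm using QP by algebra
      then show ?thesis unfolding Q_def .
    qed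
    have q2: "(fps_of_poly (smult a P * (- smult \<kappa> (b*qq^2) - smult \<epsilon> (Q*qq^2))) / fps_of_poly (b + smult \<delta> Q)) $ i = 0"
      using fps_quot[OF _ X im] b0 cQ[of 0] m1 by simp
    show "fps_nth (fps_of_poly (smult a P * (b + smult \<delta> Q)) / fps_of_poly (smult a P)
     - fps_of_poly (smult a P * (- smult \<kappa> (b*qq^2) - smult \<epsilon> (Q*qq^2))) / fps_of_poly (b + smult \<delta> Q)) i
     = coeff (b - smult \<gamma> Q) i"
      using q1 q2 cQ[OF im] by simp
  qed
  have f10: "(smult (s*J2/J1) b + smult r Q) * qq^(2*(m-2)+2) = - smult (inverse a) ((b - smult \<gamma> Q)^2 * smult a P)
     + (b + smult \<delta> Q) * (b - smult \<gamma> Q) * P - smult a ((- smult \<kappa> (b*qq^2) - smult \<epsilon> (Q*qq^2)) * qq^(2*(m-2)))"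
    unfolding p1 p2 by (rule even_poly[OF anz QP x1 x2])
  have f11: "(b + smult (-(2*((J2-J1)/J1+1)*s)) Q) * smult a P = smult 2 (smult a P * (b - smult \<gamma> Q)) - (b + smult \<delta> Q) * smult a P"
    unfolding x3 sm c_minus c_add c_mult numeral_poly[symmetric] by algebra
  have f12: "-Q = - smult (inverse a) (smult a P * qq^2)" using anz QP by simp
  show ?thesis unfolding NextABC_def a_def[symmetric] hA hB hC hA' hB' hC' hk hD P_def[symmetric]
    using f1 f2 f3 f4 anz f6 f7 f8 f9 f10 f11 f12 by (intro conjI; (assumption)?)
qed

lemma odd_case:
  assumes m2: "m \<ge> 2"
  shows "NextABC (Aseq m (2*j+1)) (Bseq7 m (2*j+1)) (Cseq m (2*j+1)) (Aseq m (2*j+1+1)) (Bseq7 m (2*j+1+1))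
           (Cseq m (2*j+1+1)) (kseq m (2*j+1)) (aseq m (2*j+1)) (Dseq m (2*j+1))"
proof -
  define b where "b = beta m"
  define P where "P = qq^(m-2)"
  define Q where "Q = qq^m"
  define s where "s = (-1::K)^m"
  define u where "u = tt^m"
  define J1 where "J1 = J m (j+1)"
  define J2 where "J2 = J m (j+2)"
  define a where "a = aseq m (2*j+1)"
  define r where "r = (1-2*J2)/J1 - (J2-J1)*J2/J1^2"
  define \<sigma> where "\<sigma> = -(2*((J2-J1)/J1+1)*s)"
  define y where "y = s*u*J1/J2"
  define z where "z = 2*(1/J2-1)*s"
  define \<epsilon> where "\<epsilon> = (1/J2 - (J2-J1)/J1 - 2)*s"
  have m1: "m \<ge> 1" using m2 by simp
  have QP: "Q = P*qq^2"
  proof -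
    have "m = (m-2)+2" using m2 by simp
    then show ?thesis unfolding Q_def P_def by (metis power_add)
  qed
  have hJ2: "J2 = 1+u*J1" unfolding J2_def J1_def u_def using J_Suc[of m "j+1"] by simp
  have ss: "s*s = 1" unfolding s_def by (simp flip: power_mult_distrib)
  have J1nz: "J1 \<noteq> 0" unfolding J1_def using J_nz m1 by simp
  have J2nz: "J2 \<noteq> 0" unfolding J2_def using J_nz m1 by simp
  have s0: "s \<noteq> 0" using ss by auto
  have a_eq: "a = s*J2/J1" unfolding a_def s_def J1_def J2_def by (rule a_odd)
  have anz: "a \<noteq> 0" using a_eq J1nz J2nz s0 by simp
  have idx: "2*j+1+1 = 2*(j+1)" by simp
  have hA: "Aseq m (2*j+1) = smult a b + smult r Q"
    unfolding a_eq r_def s_def J2_def J1_def b_def Q_def by (rule A_odd)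
  have hB: "Bseq7 m (2*j+1) = b + smult \<sigma> Q"
    unfolding \<sigma>_def s_def J2_def J1_def b_def Q_def by (rule B_odd)
  have hC: "Cseq m (2*j+1) = -Q" unfolding Q_def by (rule C_odd)
  have hD: "Dseq m (2*j+1) = 1" by (rule D_odd)
  have hk: "kseq m (2*j+1) = 0" by (rule k_odd)
  have hA2: "Aseq m (2*j+1+1) = smult y P"
    unfolding idx A_even P_def y_def a_even s_def u_def J1_def J2_def by simp
  have hB2: "Bseq7 m (2*j+1+1) = b + smult z Q"
    unfolding idx B_even b_def z_def Q_def s_def J2_def by simp
  have hC2: "Cseq m (2*j+1+1) = - smult 1 (b*qq^2) - smult \<epsilon> (Q*qq^2)"
  proof -
    have "Cseq m (2*(j+1)) = - smult 1 (beta m*qq^2) - smult ((1/J m (j+1+1) - (J m (j+1+1) - J m (j+1))/J m (j+1) - 2)*(-1)^m) (qq^m*qq^2)"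
      by (rule C_even) simp
    then show ?thesis unfolding idx \<epsilon>_def b_def Q_def s_def J1_def J2_def by simp
  qed
  have ey: "y = \<sigma> + a - r * inverse a"
    using sc_O1[OF hJ2 ss J1nz J2nz] unfolding y_def \<sigma>_def r_def a_eq by simp
  have ez: "z = 2*(r * inverse a) - \<sigma>"
    using sc_O2[OF hJ2 ss J1nz J2nz] unfolding z_def \<sigma>_def r_def a_eq by simp
  have ee: "\<epsilon> = r * inverse a"
    using sc_O3[OF hJ2 ss J1nz J2nz] unfolding \<epsilon>_def r_def a_eq by simp
  have ia: "[:inverse a:] * [:a:] = 1" using anz by (simp add: mult_to_poly)
  have Qnz: "Q \<noteq> 0" unfolding Q_def qq_def by simp
  have cQ: "\<And>i. i < m \<Longrightarrow> coeff Q i = 0" unfolding Q_def by (simp add: coeff_qq_pow)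
  have b0: "coeff b 0 = 1" unfolding b_def using beta0 m1 .
  have f7: "coeff (smult a b + smult r Q) 0 = a" using b0 cQ[of 0] m1 by simp
  have f1: "smult a b + smult r Q \<noteq> 0"
  proof
    assume "smult a b + smult r Q = 0"
    then have "coeff (smult a b + smult r Q) 0 = 0" by (simp only: coeff_0)
    then show False using f7 anz by simp
  qed
  have f2: "-Q \<noteq> 0" using Qnz by simp
  have f3: "poly (b + smult \<sigma> Q) 0 = 1" using b0 cQ[of 0] m1 by (simp add: poly_0_coeff_0)
  have f4: "poly (-Q) 0 = 0" using cQ[of 0] m1 by (simp add: poly_0_coeff_0)
  have f6: "\<forall>i<0. coeff (smult a b + smult r Q) i = 0" by simp
  have f8: "degree (1::K poly) \<le> 0+1" by simp
  have f9: "\<forall>i\<le>0+1. fps_nth (fps_of_poly (smult a (qq^0) * (b + smult \<sigma> Q)) / fps_of_poly (smult a b + smult r Q)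
     - fps_of_poly (smult a (qq^0) * (-Q)) / fps_of_poly (b + smult \<sigma> Q)) i
     = coeff 1 i"
  proof (intro allI impI)
    fix i :: nat assume i: "i \<le> 0+1"
    then have im: "i < m" using m2 by simp
    have X1: "smult a (qq^0) * (b + smult \<sigma> Q) = 1 * (smult a b + smult r Q) + qq^m * smult (a*\<sigma> - r) 1"
    proof -
      have "smult a (qq^0) * (b + smult \<sigma> Q) = 1 * (smult a b + smult r Q) + Q * smult (a*\<sigma> - r) 1"
        unfolding sm c_diff c_mult by algebra
      then show ?thesis unfolding Q_def .
    qed
    have X2: "smult a (qq^0) * (-Q) = 0 * (b + smult \<sigma> Q) + qq^m * smult (-a) 1"
      unfolding Q_def by simp
    have q1: "(fps_of_poly (smult a (qq^0) * (b + smult \<sigma> Q)) / fps_of_poly (smult a b + smult r Q)) $ i = coeff 1 i"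
      using fps_quot[OF _ X1 im] f7 anz by simp
    have q2: "(fps_of_poly (smult a (qq^0) * (-Q)) / fps_of_poly (b + smult \<sigma> Q)) $ i = 0"
      using fps_quot[OF _ X2 im] f3 b0 cQ[of 0] m1 by simp
    show "fps_nth (fps_of_poly (smult a (qq^0) * (b + smult \<sigma> Q)) / fps_of_poly (smult a b + smult r Q)
     - fps_of_poly (smult a (qq^0) * (-Q)) / fps_of_poly (b + smult \<sigma> Q)) i
     = coeff 1 i" using q1 q2 by simp
  qed
  have f10: "smult y P * qq^(2*0+2) = - smult (inverse a) (1^2 * (smult a b + smult r Q))
      + (b + smult \<sigma> Q) * 1 * qq^0 - smult a ((-Q) * qq^(2*0))"
  proof -
    have "smult y P * qq^2 = - smult (inverse a) (smult a b + smult r Q) + (b + smult \<sigma> Q) - smult a (-Q)"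
      unfolding ey sm c_add c_diff c_mult using ia QP by algebra
    then show ?thesis by (simp add: power2_eq_square)
  qed
  have f11: "(b + smult z Q) * smult a (qq^0) = smult 2 ((smult a b + smult r Q) * 1) - (b + smult \<sigma> Q) * smult a (qq^0)"
  proof -
    have "(b + smult z Q) * smult a 1 = smult 2 (smult a b + smult r Q) - (b + smult \<sigma> Q) * smult a 1"
      unfolding ez sm c_add c_diff c_mult numeral_poly[symmetric] using ia by algebra
    then show ?thesis by simp
  qed
  have f12: "- smult 1 (b*qq^2) - smult \<epsilon> (Q*qq^2) = - smult (inverse a) ((smult a b + smult r Q) * qq^2)"
  proof -
    have c1: "[:1::K:] = 1" by simp
    show ?thesis unfolding ee sm c_mult c1 using ia by algebra
  qed
  show ?thesis unfolding NextABC_def a_def[symmetric] hA hB hC hA2 hB2 hC2 hk hD P_def[symmetric]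
    using f1 f2 f3 f4 anz f6 f7 f8 f9 f10 f11 f12 by (intro conjI; (assumption)?)
qed

theorem lemma7p1:
  fixes m :: nat
  assumes "m \<ge> 2"
  shows "\<forall>n. NextABC (Aseq m n) (Bseq7 m n) (Cseq m n)
                     (Aseq m (n + 1)) (Bseq7 m (n + 1)) (Cseq m (n + 1))
                     (kseq m n) (aseq m n) (Dseq m n)"
proof
  fix n
  show "NextABC (Aseq m n) (Bseq7 m n) (Cseq m n)
                     (Aseq m (n + 1)) (Bseq7 m (n + 1)) (Cseq m (n + 1))
                     (kseq m n) (aseq m n) (Dseq m n)"
  proof (cases "even n")
    case True
    then obtain j where "n = 2*j" by (auto elim: evenE)
    then show ?thesis using even_case[OF assms, of j] by simp
  next
    case False
    then obtain j where "n = 2*j+1" by (auto elim: oddE)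
    then show ?thesis using odd_case[OF assms, of j] by simp
  qed
qed


end
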